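(* Let $[n]=\{1,\dots,n\}$ be a set of items, let $\boldsymbol\theta=(\boldsymbol\theta_1,\dots,\boldsymbol\theta_n)$ be a vector of independent non-negative real random variables, let $f:\mathbb{R}^n_{\ge 0}\to\mathbb{R}_{\ge 0}$ be a monotone submodular value function, and let $k\in[n]$. Let $S_0:=\emptyset$ and, for $t=1,\dots,k$, let $S_t:=S_{t-1}\cup\{i_t\}$ where $i_t\in[n]\setminus S_{t-1}$ maximizes $\mathbb{E}_{\boldsymbol\theta}[f(\boldsymbol\theta(S_{t-1}\cup\{i\}))]$ over $i\in[n]\setminus S_{t-1}$ (non-adaptive greedy algorithm). Then $$\mathbb{E}_{\boldsymbol\theta}[f(\boldsymbol\theta(S_k))]\ \ge\ \frac12\left(1-\frac{1}{e^2}\right)\,OPT_A(k),$$ where $OPT_A(k)$ is the maximum, over all adaptive policies $\pi$, of $\mathbb{E}_{\boldsymbol\theta}[f(\boldsymbol\theta(U_{\boldsymbol\theta,k}(\pi)))]$. That is, the non-adaptive greedy algorithm is a $\frac12(1-\frac1{e^2})$-approximation algorithm for the stochastic monotone submodular maximization problem.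
   Context: A function $f:\mathbb{R}^n_{\ge0}\to\mathbb{R}_{\ge0}$ is a monotone submodular value function if it is non-decreasing in each coordinate and $f(x\vee y)+f(x\wedge y)\le f(x)+f(y)$ for all $x,y\in\mathbb{R}^n_{\ge0}$, where $\vee$ and $\wedge$ are the componentwise maximum and minimum. For $S\subseteq[n]$, the partial state $\boldsymbol\theta(S)$ is the random vector with $i$-th coordinate $\boldsymbol\theta_i$ if $i\in S$ and $0$ otherwise (it is understood that observing $\boldsymbol\theta(S)$ also reveals the set $S$). An adaptive policy $\pi$ starts with $U=\emptyset$ and, for $k$ steps, observes the partial state $\xi=\boldsymbol\theta(U)$ and adds to $U$ an item $\pi(\xi)\in[n]\setminus U$; the resulting random set of $k$ items is denoted $U_{\boldsymbol\theta,k}(\pi)$. The stochastic monotone submodular maximization problem asks for an adaptive policy maximizing $\mathbb{E}_{\boldsymbol\theta}[f(\boldsymbol\theta(U_{\boldsymbol\theta,k}(\pi)))]$. *)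

theory Defs
  imports "HOL-Probability.Probability"
begin

text \<open>Items are [n] = {1..n}. Vectors in R^n are extensional functions on {1..n}
  (the carrier of the product measure PiM {1..n}).\<close>

definition nonneg_vecs :: "nat \<Rightarrow> (nat \<Rightarrow> real) set" where
  "nonneg_vecs n = {x. x \<in> extensional {1..n} \<and> (\<forall>i\<in>{1..n}. 0 \<le> x i)}"

definition vjoin :: "nat \<Rightarrow> (nat \<Rightarrow> real) \<Rightarrow> (nat \<Rightarrow> real) \<Rightarrow> (nat \<Rightarrow> real)" where
  "vjoin n x y = (\<lambda>i\<in>{1..n}. max (x i) (y i))"

definition vmeet :: "nat \<Rightarrow> (nat \<Rightarrow> real) \<Rightarrow> (nat \<Rightarrow> real) \<Rightarrow> (nat \<Rightarrow> real)" where
  "vmeet n x y = (\<lambda>i\<in>{1..n}. min (x i) (y i))"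

definition monotone_submodular :: "nat \<Rightarrow> ((nat \<Rightarrow> real) \<Rightarrow> real) \<Rightarrow> bool" where
  "monotone_submodular n f \<longleftrightarrow>
     (\<forall>x\<in>nonneg_vecs n. 0 \<le> f x) \<and>
     (\<forall>x\<in>nonneg_vecs n. \<forall>y\<in>nonneg_vecs n. (\<forall>i\<in>{1..n}. x i \<le> y i) \<longrightarrow> f x \<le> f y) \<and>
     (\<forall>x\<in>nonneg_vecs n. \<forall>y\<in>nonneg_vecs n. f (vjoin n x y) + f (vmeet n x y) \<le> f x + f y)"

definition partial_state :: "nat \<Rightarrow> nat set \<Rightarrow> (nat \<Rightarrow> real) \<Rightarrow> (nat \<Rightarrow> real)" where
  "partial_state n S \<theta> = (\<lambda>i\<in>{1..n}. if i \<in> S then \<theta> i else 0)"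

text \<open>Joint law of the independent theta_i: product of the marginals M i.
  Expectations of non-negative quantities are taken in ennreal (possibly infinite).\<close>
definition expected_value ::
  "nat \<Rightarrow> (nat \<Rightarrow> real measure) \<Rightarrow> ((nat \<Rightarrow> real) \<Rightarrow> real) \<Rightarrow> nat set \<Rightarrow> ennreal" where
  "expected_value n M f S = (\<integral>\<^sup>+ \<theta>. ennreal (f (partial_state n S \<theta>)) \<partial>(PiM {1..n} M))"

text \<open>Adaptive policy: observes (U, theta(U)) and returns the next item.\<close>
primrec adaptive_set ::
  "(nat set \<times> (nat \<Rightarrow> real) \<Rightarrow> nat) \<Rightarrow> nat \<Rightarrow> (nat \<Rightarrow> real) \<Rightarrow> nat \<Rightarrow> nat set" where
  "adaptive_set \<pi> n \<theta> 0 = {}"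
| "adaptive_set \<pi> n \<theta> (Suc t) =
     insert (\<pi> (adaptive_set \<pi> n \<theta> t, partial_state n (adaptive_set \<pi> n \<theta> t) \<theta>))
            (adaptive_set \<pi> n \<theta> t)"

definition valid_policy :: "nat \<Rightarrow> nat \<Rightarrow> (nat set \<times> (nat \<Rightarrow> real) \<Rightarrow> nat) \<Rightarrow> bool" where
  "valid_policy n k \<pi> \<longleftrightarrow>
     (\<forall>U x. U \<subseteq> {1..n} \<and> card U < k \<longrightarrow> \<pi> (U, x) \<in> {1..n} - U)"

definition adaptive_value ::
  "nat \<Rightarrow> (nat \<Rightarrow> real measure) \<Rightarrow> ((nat \<Rightarrow> real) \<Rightarrow> real) \<Rightarrow> nat
     \<Rightarrow> (nat set \<times> (nat \<Rightarrow> real) \<Rightarrow> nat) \<Rightarrow> ennreal" where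
  "adaptive_value n M f k \<pi> =
     (\<integral>\<^sup>+ \<theta>. ennreal (f (partial_state n (adaptive_set \<pi> n \<theta> k) \<theta>)) \<partial>(PiM {1..n} M))"

text \<open>Policies whose outcome is a random variable (so that its expectation is defined).\<close>
definition admissible_policies ::
  "nat \<Rightarrow> (nat \<Rightarrow> real measure) \<Rightarrow> ((nat \<Rightarrow> real) \<Rightarrow> real) \<Rightarrow> nat
     \<Rightarrow> (nat set \<times> (nat \<Rightarrow> real) \<Rightarrow> nat) set" where
  "admissible_policies n M f k =
     {\<pi>. valid_policy n k \<pi> \<and>
          (\<lambda>\<theta>. f (partial_state n (adaptive_set \<pi> n \<theta> k) \<theta>)) \<in> borel_measurable (PiM {1..n} M)}"

definition OPT_A ::
  "nat \<Rightarrow> (nat \<Rightarrow> real measure) \<Rightarrow> ((nat \<Rightarrow> real) \<Rightarrow> real) \<Rightarrow> nat \<Rightarrow> ennreal" where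
  "OPT_A n M f k = (SUP \<pi>\<in>admissible_policies n M f k. adaptive_value n M f k \<pi>)"

text \<open>S 0, ..., S k is a run of the non-adaptive greedy algorithm (any tie-breaking).\<close>
definition is_nonadaptive_greedy ::
  "nat \<Rightarrow> (nat \<Rightarrow> real measure) \<Rightarrow> ((nat \<Rightarrow> real) \<Rightarrow> real) \<Rightarrow> nat \<Rightarrow> (nat \<Rightarrow> nat set) \<Rightarrow> bool" where
  "is_nonadaptive_greedy n M f k S \<longleftrightarrow>
     S 0 = {} \<and>
     (\<forall>t\<in>{1..k}. \<exists>i\<in>{1..n} - S (t - 1).
        S t = insert i (S (t - 1)) \<and>
        (\<forall>j\<in>{1..n} - S (t - 1).
           expected_value n M f (insert j (S (t - 1))) \<le> expected_value n M f (S t)))"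

end

theory Submission
  imports Defs
begin

lemma upd_meas[measurable]:
  assumes "i \<in> I" "y \<in> space (M i)"
  shows "(\<lambda>x. x(i:=y)) \<in> measurable (PiM I M) (PiM I M)"
proof -
  have m: "(\<lambda>x. \<lambda>j\<in>I. if j = i then y else x j) \<in> measurable (PiM I M) (PiM I M)"
  proof (intro measurable_restrict)
    fix j assume "j \<in> I"
    then show "(\<lambda>x. if j = i then y else x j) \<in> measurable (PiM I M) (M j)"
      using assms by (cases "j = i") auto
  qed
  show ?thesis
    by (rule measurable_cong[THEN iffD1, OF _ m])
       (use assms in \<open>auto simp: space_PiM PiE_def extensional_def fun_eq_iff\<close>)
qed

lemma fub_aux:
  fixes M :: "'i \<Rightarrow> 'a measure"
  assumes prob: "\<And>j. prob_space (M j)" and fin: "finite I" and i: "i \<in> I"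
    and g[measurable]: "g \<in> borel_measurable (PiM I M)"
  shows "(\<lambda>y. \<integral>\<^sup>+\<theta>. g (\<theta>(i:=y)) \<partial>PiM I M) \<in> borel_measurable (M i)"
    "(\<integral>\<^sup>+\<theta>. g \<theta> \<partial>PiM I M) = (\<integral>\<^sup>+y. \<integral>\<^sup>+\<theta>. g (\<theta>(i:=y)) \<partial>PiM I M \<partial>M i)"
proof -
  interpret product_prob_space M "I - {i}"
    by (simp add: prob product_prob_space_def product_prob_space_axioms_def product_sigma_finite_def prob_space_imp_sigma_finite)
  interpret J: finite_product_sigma_finite M "I - {i}"
    by standard (use fin in auto)
  have II: "insert i (I - {i}) = I" using i by auto
  have gm: "g \<in> borel_measurable (PiM (insert i (I - {i})) M)" using II g by simp
  have eq: "(\<integral>\<^sup>+\<theta>. g (\<theta>(i:=y)) \<partial>PiM I M) = (\<integral>\<^sup>+x. g (x(i:=y)) \<partial>PiM (I - {i}) M)"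
    if y: "y \<in> space (M i)" for y
  proof -
    have hm: "(\<lambda>\<theta>. g (\<theta>(i:=y))) \<in> borel_measurable (PiM (insert i (I - {i})) M)"
      using y II i by simp
    have "(\<integral>\<^sup>+\<theta>. g (\<theta>(i:=y)) \<partial>PiM I M) = (\<integral>\<^sup>+\<theta>. g (\<theta>(i:=y)) \<partial>PiM (insert i (I - {i})) M)"
      using II by simp
    also have "\<dots> = (\<integral>\<^sup>+w. (\<integral>\<^sup>+ x. g ((x(i := w))(i:=y)) \<partial>(Pi\<^sub>M (I - {i}) M)) \<partial>(M i))"
      by (rule product_nn_integral_insert_rev[OF _ _ hm]) (use fin in auto)
    also have "\<dots> = (\<integral>\<^sup>+w. (\<integral>\<^sup>+ x. g (x(i:=y)) \<partial>(Pi\<^sub>M (I - {i}) M)) \<partial>(M i))"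
      by simp
    also have "\<dots> = (\<integral>\<^sup>+ x. g (x(i:=y)) \<partial>(Pi\<^sub>M (I - {i}) M))"
      using prob_space.emeasure_space_1[OF prob[of i]] by (simp add: nn_integral_const)
    finally show ?thesis .
  qed
  have m2: "(\<lambda>y. \<integral>\<^sup>+x. g (x(i:=y)) \<partial>PiM (I - {i}) M) \<in> borel_measurable (M i)"
    using gm by measurable
  show "(\<lambda>y. \<integral>\<^sup>+\<theta>. g (\<theta>(i:=y)) \<partial>PiM I M) \<in> borel_measurable (M i)"
    using measurable_cong[THEN iffD2, OF _ m2] eq by metis
  have "(\<integral>\<^sup>+\<theta>. g \<theta> \<partial>PiM I M) = (\<integral>\<^sup>+\<theta>. g \<theta> \<partial>PiM (insert i (I - {i})) M)" using II by simp
  also have "\<dots> = (\<integral>\<^sup>+y. \<integral>\<^sup>+x. g (x(i:=y)) \<partial>PiM (I - {i}) M \<partial>M i)"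
    by (rule product_nn_integral_insert_rev[OF _ _ gm]) (use fin in auto)
  also have "\<dots> = (\<integral>\<^sup>+y. \<integral>\<^sup>+\<theta>. g (\<theta>(i:=y)) \<partial>PiM I M \<partial>M i)"
    by (intro nn_integral_cong) (simp add: eq)
  finally show "(\<integral>\<^sup>+\<theta>. g \<theta> \<partial>PiM I M) = (\<integral>\<^sup>+y. \<integral>\<^sup>+\<theta>. g (\<theta>(i:=y)) \<partial>PiM I M \<partial>M i)" .
qed


definition mrg :: "nat set \<Rightarrow> (nat \<Rightarrow> real) \<Rightarrow> (nat \<Rightarrow> real) \<Rightarrow> (nat \<Rightarrow> real)" where
  "mrg A z \<theta> = (\<lambda>j. if j \<in> A then z j else \<theta> j)"

primrec run :: "(nat set \<times> (nat \<Rightarrow> real) \<Rightarrow> nat) \<Rightarrow> nat \<Rightarrow> nat set \<Rightarrow> (nat \<Rightarrow> real) \<Rightarrow> nat \<Rightarrow> nat set" where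
  "run \<pi> n A \<theta> 0 = A"
| "run \<pi> n A \<theta> (Suc t) = insert (\<pi> (run \<pi> n A \<theta> t, partial_state n (run \<pi> n A \<theta> t) \<theta>)) (run \<pi> n A \<theta> t)"

lemma adaptive_set_run: "adaptive_set \<pi> n \<theta> t = run \<pi> n {} \<theta> t"
  by (induction t) auto

lemma run_shift: "run \<pi> n A \<theta> (Suc m) = run \<pi> n (insert (\<pi> (A, partial_state n A \<theta>)) A) \<theta> m"
  by (induction m) auto

lemma mrg_empty[simp]: "mrg {} z \<theta> = \<theta>" by (simp add: mrg_def)

lemma nonneg_vecs_ps: "(\<And>j. j \<in> T \<Longrightarrow> j \<in> {1..n} \<Longrightarrow> 0 \<le> v j) \<Longrightarrow> partial_state n T v \<in> nonneg_vecs n"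
  by (auto simp: nonneg_vecs_def partial_state_def)

locale setting =
  fixes n :: nat and M :: "nat \<Rightarrow> real measure" and f :: "(nat \<Rightarrow> real) \<Rightarrow> real"
  assumes prob: "\<forall>i\<in>{1..n}. prob_space (M i)"
    and sets: "\<forall>i\<in>{1..n}. sets (M i) = sets borel"
    and nn: "\<forall>i\<in>{1..n}. AE x in M i. 0 \<le> x"
    and ms: "monotone_submodular n f"
    and fm: "f \<in> borel_measurable (PiM {1..n} (\<lambda>_. borel))"
begin

abbreviation "P \<equiv> PiM {1..n} M"
abbreviation "F \<equiv> expected_value n M f"

lemma probP: "prob_space P"
  by (rule prob_space_PiM) (use prob in auto)

lemma AE_nonneg: "AE \<theta> in P. \<forall>j\<in>{1..n}. 0 \<le> \<theta> j"
proof -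
  have "\<forall>j\<in>{1..n}. AE \<theta> in P. 0 \<le> \<theta> j"
    using AE_PiM_component[of "{1..n}" M _ "\<lambda>x. 0 \<le> x"] prob nn by auto
  then show ?thesis by (simp add: AE_finite_all)
qed

lemma f_nonneg: "x \<in> nonneg_vecs n \<Longrightarrow> 0 \<le> f x"
  using ms by (auto simp: monotone_submodular_def)

lemma f_mono: "x \<in> nonneg_vecs n \<Longrightarrow> y \<in> nonneg_vecs n \<Longrightarrow> (\<And>j. j \<in> {1..n} \<Longrightarrow> x j \<le> y j) \<Longrightarrow> f x \<le> f y"
  using ms by (auto simp: monotone_submodular_def)

lemma sub2:
  assumes "a \<in> nonneg_vecs n" "b \<in> nonneg_vecs n" "c \<in> nonneg_vecs n" "d \<in> nonneg_vecs n"
    and "\<And>j. j \<in> {1..n} \<Longrightarrow> c j \<le> max (a j) (b j)"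
    and "\<And>j. j \<in> {1..n} \<Longrightarrow> d j \<le> min (a j) (b j)"
  shows "f c + f d \<le> f a + f b"
proof -
  have J: "vjoin n a b \<in> nonneg_vecs n" and Mt: "vmeet n a b \<in> nonneg_vecs n"
    using assms(1,2) by (auto simp: nonneg_vecs_def vjoin_def vmeet_def)
  have "f c \<le> f (vjoin n a b)"
    using ms assms(3,5) J unfolding monotone_submodular_def by (auto simp: vjoin_def)
  moreover have "f d \<le> f (vmeet n a b)"
    using ms assms(4,6) Mt unfolding monotone_submodular_def by (auto simp: vmeet_def)
  moreover have "f (vjoin n a b) + f (vmeet n a b) \<le> f a + f b"
    using ms assms(1,2) unfolding monotone_submodular_def by auto
  ultimately show ?thesis by linarith
qed

lemma comp_meas: "j \<in> {1..n} \<Longrightarrow> (\<lambda>\<theta>. \<theta> j) \<in> borel_measurable P"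
  using measurable_component_singleton[of j "{1..n}" M] sets
  by (metis measurable_cong_sets)

lemma vec_meas:
  assumes "\<And>j. j \<in> {1..n} \<Longrightarrow> h j \<in> borel_measurable P"
  shows "(\<lambda>\<theta>. ennreal (f (\<lambda>j\<in>{1..n}. h j \<theta>))) \<in> borel_measurable P"
proof -
  have "(\<lambda>\<theta>. \<lambda>j\<in>{1..n}. h j \<theta>) \<in> measurable P (PiM {1..n} (\<lambda>_. borel))"
    using assms by (intro measurable_restrict) auto
  from measurable_compose[OF this fm] show ?thesis by measurable
qed

lemma ps_meas: "(\<lambda>\<theta>. ennreal (f (partial_state n T (mrg B z \<theta>)))) \<in> borel_measurable P"
  unfolding partial_state_def
proof (rule vec_meas)
  fix j assume j: "j \<in> {1..n}"
  show "(\<lambda>\<theta>. if j \<in> T then mrg B z \<theta> j else 0) \<in> borel_measurable P"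
    using comp_meas[OF j] by (cases "j \<in> T"; cases "j \<in> B") (auto simp: mrg_def)
qed

lemma ps_meas0: "(\<lambda>\<theta>. ennreal (f (partial_state n T \<theta>))) \<in> borel_measurable P"
  using ps_meas[of T "{}"] by simp

lemma fub:
  assumes i: "i \<in> {1..n}" and g: "g \<in> borel_measurable P"
  shows "(\<lambda>y. \<integral>\<^sup>+\<theta>. g (\<theta>(i:=y)) \<partial>P) \<in> borel_measurable (M i)"
    "(\<integral>\<^sup>+\<theta>. g \<theta> \<partial>P) = (\<integral>\<^sup>+y. \<integral>\<^sup>+\<theta>. g (\<theta>(i:=y)) \<partial>P \<partial>M i)"
proof -
  define M' where "M' = (\<lambda>j. if j \<in> {1..n} then M j else return borel 0)"
  have pr: "prob_space (M' j)" for j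
    using prob by (auto simp: M'_def prob_space_return)
  have PP: "PiM {1..n} M' = P" by (rule PiM_cong) (auto simp: M'_def)
  have Mi: "M' i = M i" using i by (simp add: M'_def)
  show "(\<lambda>y. \<integral>\<^sup>+\<theta>. g (\<theta>(i:=y)) \<partial>P) \<in> borel_measurable (M i)"
    using fub_aux(1)[where M=M' and I="{1..n}" and i=i and g=g] pr g PP Mi i by simp
  show "(\<integral>\<^sup>+\<theta>. g \<theta> \<partial>P) = (\<integral>\<^sup>+y. \<integral>\<^sup>+\<theta>. g (\<theta>(i:=y)) \<partial>P \<partial>M i)"
    using fub_aux(2)[where M=M' and I="{1..n}" and i=i and g=g] pr g PP Mi i by simp
qed

lemma F_mono: assumes "T \<subseteq> T'" shows "F T \<le> F T'"
  unfolding expected_value_def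
proof (rule nn_integral_mono_AE)
  show "AE \<theta> in P. ennreal (f (partial_state n T \<theta>)) \<le> ennreal (f (partial_state n T' \<theta>))"
    using AE_nonneg
  proof eventually_elim
    case (elim \<theta>)
    have a: "partial_state n T \<theta> \<in> nonneg_vecs n" "partial_state n T' \<theta> \<in> nonneg_vecs n"
      using elim by (auto intro!: nonneg_vecs_ps)
    have "f (partial_state n T \<theta>) \<le> f (partial_state n T' \<theta>)"
      using a elim assms by (intro f_mono) (auto simp: partial_state_def)
    then show ?case by (simp add: ennreal_leI)
  qed
qed

end


context setting
begin

definition T1 :: "nat set \<Rightarrow> nat set \<Rightarrow> (nat \<Rightarrow> real) \<Rightarrow> ennreal" where
  "T1 S A z = (\<integral>\<^sup>+\<theta>. ennreal (f (partial_state n S (mrg A z \<theta>))) \<partial>P)"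

definition T2 :: "nat set \<Rightarrow> nat set \<Rightarrow> (nat \<Rightarrow> real) \<Rightarrow> ennreal" where
  "T2 S A z = (\<integral>\<^sup>+\<theta>. ennreal (f (partial_state n (S \<union> A) (mrg (A - S) z \<theta>))) \<partial>P)"

definition V where
  "V \<pi> A z m \<theta> = ennreal (f (partial_state n (run \<pi> n A (mrg A z \<theta>) m) (mrg A z \<theta>)))"

lemma ennreal_add_le: "0 \<le> a \<Longrightarrow> 0 \<le> b \<Longrightarrow> c \<le> a + b \<Longrightarrow> ennreal c \<le> ennreal a + ennreal b"
  by (metis ennreal_leI ennreal_plus)

lemma key:
  assumes vp: "valid_policy n k \<pi>" and SS: "S \<subseteq> {1..n}" and FG: "F S \<le> G"
    and GG: "\<forall>i\<in>{1..n}-S. F (insert i S) \<le> G"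
  shows "A \<subseteq> {1..n} \<Longrightarrow> card A + m \<le> k \<Longrightarrow> (\<forall>j\<in>A. 0 \<le> z j) \<Longrightarrow>
    V \<pi> A z m \<in> borel_measurable P \<Longrightarrow>
    integral\<^sup>N P (V \<pi> A z m) + of_nat m * F S \<le> T1 S A z + T2 S A z + of_nat m * G"
proof (induction m arbitrary: A z)
  case 0
  have "AE \<theta> in P. V \<pi> A z 0 \<theta> \<le> ennreal (f (partial_state n S (mrg A z \<theta>)))
           + ennreal (f (partial_state n (S \<union> A) (mrg (A - S) z \<theta>)))"
    using AE_nonneg
  proof eventually_elim
    case (elim \<theta>)
    let ?a = "partial_state n S (mrg A z \<theta>)"
    let ?b = "partial_state n (S \<union> A) (mrg (A - S) z \<theta>)"
    let ?c = "partial_state n A (mrg A z \<theta>)"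
    let ?d = "partial_state n {} \<theta>"
    have nv: "?a \<in> nonneg_vecs n" "?b \<in> nonneg_vecs n" "?c \<in> nonneg_vecs n" "?d \<in> nonneg_vecs n"
      using elim "0.prems"(3) by (auto intro!: nonneg_vecs_ps simp: mrg_def)
    have "f ?c + f ?d \<le> f ?a + f ?b"
      using nv elim "0.prems"(3) by (intro sub2) (auto simp: partial_state_def mrg_def)
    moreover have "0 \<le> f ?d" "0 \<le> f ?a" "0 \<le> f ?b" using nv f_nonneg by auto
    ultimately show ?case unfolding V_def by (intro ennreal_add_le) auto
  qed
  then have "integral\<^sup>N P (V \<pi> A z 0) \<le> (\<integral>\<^sup>+\<theta>. ennreal (f (partial_state n S (mrg A z \<theta>)))
           + ennreal (f (partial_state n (S \<union> A) (mrg (A - S) z \<theta>))) \<partial>P)"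
    by (rule nn_integral_mono_AE)
  also have "\<dots> = T1 S A z + T2 S A z"
    unfolding T1_def T2_def by (rule nn_integral_add) (rule ps_meas)+
  finally show ?case by simp
next
  case (Suc m)
  note A = Suc.prems(1) and ck = Suc.prems(2) and zn = Suc.prems(3) and Vm = Suc.prems(4)
  define i where "i = \<pi> (A, partial_state n A z)"
  have finA: "finite A" using A finite_subset by blast
  have "card A < k" using ck by simp
  then have i: "i \<in> {1..n} - A" using vp A unfolding valid_policy_def i_def by blast
  then have i1: "i \<in> {1..n}" and iA: "i \<notin> A" by auto
  interpret Mi: prob_space "M i" using prob i1 by auto
  have spi: "space (M i) = UNIV" using sets i1 sets_eq_imp_space_eq by fastforce
  have psA: "\<And>\<theta>. partial_state n A (mrg A z \<theta>) = partial_state n A z"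
    by (auto simp: partial_state_def mrg_def)
  have mu: "\<And>\<theta> y. mrg A z (\<theta>(i:=y)) = mrg (insert i A) (z(i:=y)) \<theta>"
    using iA by (auto simp: mrg_def fun_eq_iff)
  have Vy: "V \<pi> A z (Suc m) (\<theta>(i:=y)) = V \<pi> (insert i A) (z(i:=y)) m \<theta>" for \<theta> y
  proof -
    have "run \<pi> n A (mrg A z (\<theta>(i:=y))) (Suc m) = run \<pi> n (insert i A) (mrg A z (\<theta>(i:=y))) m"
      by (simp only: run_shift psA i_def)
    then show ?thesis unfolding V_def by (simp add: mu)
  qed
  have Vym: "V \<pi> (insert i A) (z(i:=y)) m \<in> borel_measurable P" for y
  proof -
    have "(\<lambda>\<theta>. V \<pi> A z (Suc m) (\<theta>(i:=y))) \<in> borel_measurable P"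
      by (rule measurable_compose[OF upd_meas[of i "{1..n}" y M] Vm]) (use i1 spi in auto)
    then show ?thesis using Vy by simp
  qed
  have IH: "AE y in M i. integral\<^sup>N P (V \<pi> (insert i A) (z(i:=y)) m) + of_nat m * F S
      \<le> T1 S (insert i A) (z(i:=y)) + T2 S (insert i A) (z(i:=y)) + of_nat m * G"
    using nn i1
  proof -
    have "AE y in M i. 0 \<le> y" using nn i1 by auto
    then show ?thesis
    proof eventually_elim
      case (elim y)
      show ?case
      proof (rule Suc.IH)
        show "insert i A \<subseteq> {1..n}" using A i1 by auto
        show "card (insert i A) + m \<le> k" using ck finA iA by simp
        show "\<forall>j\<in>insert i A. 0 \<le> (z(i := y)) j" using zn elim by auto
        show "V \<pi> (insert i A) (z(i := y)) m \<in> borel_measurable P" by (rule Vym)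
      qed
    qed
  qed
  define H where "H y = integral\<^sup>N P (V \<pi> (insert i A) (z(i:=y)) m)" for y
  have Hint: "integral\<^sup>N P (V \<pi> A z (Suc m)) = (\<integral>\<^sup>+y. H y \<partial>M i)"
    using fub(2)[OF i1 Vm] unfolding H_def Vy by simp
  have Hm: "H \<in> borel_measurable (M i)"
    using fub(1)[OF i1 Vm] unfolding H_def Vy by simp
  define Phi1 where "Phi1 = (\<lambda>\<theta>. ennreal (f (partial_state n S (mrg A z \<theta>))))"
  have T1y: "T1 S (insert i A) (z(i:=y)) = (\<integral>\<^sup>+\<theta>. Phi1 (\<theta>(i:=y)) \<partial>P)" for y
    by (simp add: T1_def Phi1_def mu)
  have T1m: "(\<lambda>y. T1 S (insert i A) (z(i:=y))) \<in> borel_measurable (M i)"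
    using fub(1)[OF i1 ps_meas[of S A z]] unfolding T1y Phi1_def .
  have T1int: "(\<integral>\<^sup>+y. T1 S (insert i A) (z(i:=y)) \<partial>M i) = T1 S A z"
  proof -
    have "T1 S A z = integral\<^sup>N P Phi1" by (simp add: T1_def Phi1_def)
    also have "\<dots> = (\<integral>\<^sup>+y. \<integral>\<^sup>+\<theta>. Phi1 (\<theta>(i:=y)) \<partial>P \<partial>M i)"
      using fub(2)[OF i1 ps_meas[of S A z]] unfolding Phi1_def .
    also have "\<dots> = (\<integral>\<^sup>+y. T1 S (insert i A) (z(i:=y)) \<partial>M i)" by (simp only: T1y)
    finally show ?thesis by simp
  qed
  have T2all: "(\<lambda>y. T2 S (insert i A) (z(i:=y))) \<in> borel_measurable (M i) \<and>
     (\<integral>\<^sup>+y. T2 S (insert i A) (z(i:=y)) \<partial>M i) + F S \<le> T2 S A z + G"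
  proof (cases "i \<in> S")
    case True
    have eq: "T2 S (insert i A) (z(i:=y)) = T2 S A z" for y
    proof -
      have "S \<union> insert i A = S \<union> A" "insert i A - S = A - S" using True by auto
      moreover have "mrg (A - S) (z(i:=y)) = mrg (A - S) z"
        using True by (auto simp: mrg_def fun_eq_iff)
      ultimately show ?thesis unfolding T2_def by simp
    qed
    show ?thesis
      using FG by (simp add: eq nn_integral_const Mi.emeasure_space_1 add_mono)
  next
    case False
    define Phi2 where "Phi2 = (\<lambda>\<theta>. ennreal (f (partial_state n (insert i (S \<union> A)) (mrg (A - S) z \<theta>))))"
    have T2y: "T2 S (insert i A) (z(i:=y)) = (\<integral>\<^sup>+\<theta>. Phi2 (\<theta>(i:=y)) \<partial>P)" for y
    proof -
      have "partial_state n (S \<union> insert i A) (mrg (insert i A - S) (z(i:=y)) \<theta>)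
          = partial_state n (insert i (S \<union> A)) (mrg (A - S) z (\<theta>(i:=y)))" for \<theta>
        using False iA by (auto simp: partial_state_def mrg_def fun_eq_iff)
      then show ?thesis unfolding T2_def Phi2_def by simp
    qed
    have P2m: "Phi2 \<in> borel_measurable P" unfolding Phi2_def by (rule ps_meas)
    have m: "(\<lambda>y. T2 S (insert i A) (z(i:=y))) \<in> borel_measurable (M i)"
      using fub(1)[OF i1 P2m] unfolding T2y .
    have int: "(\<integral>\<^sup>+y. T2 S (insert i A) (z(i:=y)) \<partial>M i) = integral\<^sup>N P Phi2"
      using fub(2)[OF i1 P2m] unfolding T2y by simp
    have "integral\<^sup>N P Phi2 + F S = (\<integral>\<^sup>+\<theta>. Phi2 \<theta> + ennreal (f (partial_state n S \<theta>)) \<partial>P)"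
      unfolding expected_value_def by (rule nn_integral_add[symmetric]) (rule P2m, rule ps_meas0)
    also have "\<dots> \<le> (\<integral>\<^sup>+\<theta>. ennreal (f (partial_state n (S \<union> A) (mrg (A - S) z \<theta>)))
                     + ennreal (f (partial_state n (insert i S) \<theta>)) \<partial>P)"
    proof (rule nn_integral_mono_AE)
      show "AE \<theta> in P. Phi2 \<theta> + ennreal (f (partial_state n S \<theta>))
          \<le> ennreal (f (partial_state n (S \<union> A) (mrg (A - S) z \<theta>))) + ennreal (f (partial_state n (insert i S) \<theta>))"
        using AE_nonneg
      proof eventually_elim
        case (elim \<theta>)
        let ?a = "partial_state n (S \<union> A) (mrg (A - S) z \<theta>)"
        let ?b = "partial_state n (insert i S) \<theta>"
        let ?c = "partial_state n (insert i (S \<union> A)) (mrg (A - S) z \<theta>)"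
        let ?d = "partial_state n S \<theta>"
        have nv: "?a \<in> nonneg_vecs n" "?b \<in> nonneg_vecs n" "?c \<in> nonneg_vecs n" "?d \<in> nonneg_vecs n"
          using elim zn by (auto intro!: nonneg_vecs_ps simp: mrg_def)
        have "f ?c + f ?d \<le> f ?a + f ?b"
          using nv elim zn False iA by (intro sub2) (auto simp: partial_state_def mrg_def)
        moreover have "0 \<le> f ?d" "0 \<le> f ?a" "0 \<le> f ?b" "0 \<le> f ?c" using nv f_nonneg by auto
        ultimately show ?case unfolding Phi2_def
          by (metis ennreal_leI ennreal_plus add_nonneg_nonneg)
      qed
    qed
    also have "\<dots> = T2 S A z + F (insert i S)"
      unfolding T2_def expected_value_def by (rule nn_integral_add) (rule ps_meas, rule ps_meas0)
    also have "\<dots> \<le> T2 S A z + G" using GG i1 False by (intro add_left_mono) auto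
    finally show ?thesis using m int by simp
  qed
  have "integral\<^sup>N P (V \<pi> A z (Suc m)) + of_nat (Suc m) * F S
      = ((\<integral>\<^sup>+y. H y \<partial>M i) + of_nat m * F S) + F S"
    unfolding Hint of_nat_Suc distrib_right by (simp add: ac_simps)
  also have "(\<integral>\<^sup>+y. H y \<partial>M i) + of_nat m * F S = (\<integral>\<^sup>+y. H y + of_nat m * F S \<partial>M i)"
    by (subst nn_integral_add) (auto simp: Hm nn_integral_const Mi.emeasure_space_1)
  also have "\<dots> \<le> (\<integral>\<^sup>+y. T1 S (insert i A) (z(i:=y)) + T2 S (insert i A) (z(i:=y)) + of_nat m * G \<partial>M i)"
    using IH unfolding H_def by (rule nn_integral_mono_AE)
  also have "\<dots> = (\<integral>\<^sup>+y. T1 S (insert i A) (z(i:=y)) \<partial>M i) + (\<integral>\<^sup>+y. T2 S (insert i A) (z(i:=y)) \<partial>M i)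
      + of_nat m * G"
  proof -
    have m2: "(\<lambda>y. T2 S (insert i A) (z(i:=y))) \<in> borel_measurable (M i)" using T2all by blast
    have "(\<integral>\<^sup>+y. T1 S (insert i A) (z(i:=y)) + T2 S (insert i A) (z(i:=y)) + of_nat m * G \<partial>M i)
       = (\<integral>\<^sup>+y. T1 S (insert i A) (z(i:=y)) + T2 S (insert i A) (z(i:=y)) \<partial>M i) + (\<integral>\<^sup>+y. of_nat m * G \<partial>M i)"
      by (rule nn_integral_add) (intro borel_measurable_add T1m m2, simp)
    also have "(\<integral>\<^sup>+y. T1 S (insert i A) (z(i:=y)) + T2 S (insert i A) (z(i:=y)) \<partial>M i)
       = (\<integral>\<^sup>+y. T1 S (insert i A) (z(i:=y)) \<partial>M i) + (\<integral>\<^sup>+y. T2 S (insert i A) (z(i:=y)) \<partial>M i)"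
      by (rule nn_integral_add) (rule T1m, rule m2)
    also have "(\<integral>\<^sup>+y. of_nat m * G \<partial>M i) = of_nat m * G"
      by (simp add: nn_integral_const Mi.emeasure_space_1)
    finally show ?thesis .
  qed
  finally have "integral\<^sup>N P (V \<pi> A z (Suc m)) + of_nat (Suc m) * F S
     \<le> T1 S A z + ((\<integral>\<^sup>+y. T2 S (insert i A) (z(i:=y)) \<partial>M i) + F S) + of_nat m * G"
    unfolding T1int by (simp add: algebra_simps add_right_mono)
  also have "\<dots> \<le> T1 S A z + (T2 S A z + G) + of_nat m * G"
    by (rule add_right_mono, rule add_left_mono) (use T2all in blast)
  finally show ?case by (simp add: algebra_simps)
qed

end

lemma real_rec:
  fixes \<alpha> :: "nat \<Rightarrow> real" and ov :: real and k :: nat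
  assumes k1: "k \<ge> 1" and ov0: "ov \<ge> 0" and al0: "\<alpha> 0 \<ge> 0"
    and mono: "\<forall>t\<in>{1..k}. \<alpha> (t-1) \<le> \<alpha> t"
    and rec: "\<forall>t\<in>{1..k}. ov + real k * \<alpha> (t-1) \<le> 2 * \<alpha> (t-1) + real k * \<alpha> t"
  shows "(1 - 1 / exp 2) / 2 * ov \<le> \<alpha> k"
proof -
  define q where "q = max 0 (1 - 2 / real k)"
  have q0: "q \<ge> 0" unfolding q_def by simp
  have kpos: "real k > 0" using k1 by simp
  have claim: "t \<le> k \<Longrightarrow> max 0 (ov - 2 * \<alpha> t) \<le> q ^ t * ov" for t
  proof (induction t)
    case 0
    show ?case using ov0 al0 by simp
  next
    case (Suc t)
    have r: "ov + real k * \<alpha> t \<le> 2 * \<alpha> t + real k * \<alpha> (Suc t)"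
      using rec Suc.prems by (metis atLeastAtMost_iff diff_Suc_1 le_add1 plus_1_eq_Suc)
    have m: "\<alpha> t \<le> \<alpha> (Suc t)"
      using mono Suc.prems by (metis atLeastAtMost_iff diff_Suc_1 le_add1 plus_1_eq_Suc)
    have IH: "max 0 (ov - 2 * \<alpha> t) \<le> q ^ t * ov" using Suc.IH Suc.prems by simp
    have nn: "0 \<le> q ^ Suc t * ov" using q0 ov0 by simp
    show ?case
    proof (cases "ov - 2 * \<alpha> t \<le> 0")
      case True
      then show ?thesis using m nn by simp
    next
      case False
      define \<beta> where "\<beta> = ov - 2 * \<alpha> t"
      have bpos: "\<beta> > 0" using False \<beta>_def by simp
      have d: "\<alpha> (Suc t) - \<alpha> t \<ge> \<beta> / real k"
        using r kpos unfolding \<beta>_def by (simp add: field_simps)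
      have "ov - 2 * \<alpha> (Suc t) = \<beta> - 2 * (\<alpha> (Suc t) - \<alpha> t)" unfolding \<beta>_def by simp
      also have "\<dots> \<le> \<beta> - 2 * (\<beta> / real k)" using d by simp
      also have "\<dots> = (1 - 2 / real k) * \<beta>" by (simp add: field_simps)
      also have "\<dots> \<le> q * \<beta>" unfolding q_def using bpos by (intro mult_right_mono) auto
      also have "\<dots> \<le> q * (q ^ t * ov)" using IH bpos q0 unfolding \<beta>_def by (intro mult_left_mono) auto
      finally show ?thesis using nn by simp
    qed
  qed
  have qk: "q ^ k \<le> exp (-2)"
  proof (cases "k = 1")
    case True
    then show ?thesis unfolding q_def by simp
  next
    case False
    then have k2: "real k \<ge> 2" using k1 by simp
    then have qq: "q = 1 - 2 / real k" unfolding q_def by (simp add: field_simps)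
    have "q \<le> exp (- 2 / real k)" unfolding qq using exp_ge_add_one_self[of "- 2 / real k"] by simp
    then have "q ^ k \<le> exp (- 2 / real k) ^ k" using q0 by (intro power_mono) auto
    also have "\<dots> = exp (real k * (- 2 / real k))" by (simp only: exp_of_nat_mult)
    also have "\<dots> = exp (-2)" using kpos by simp
    finally show ?thesis .
  qed
  have "ov - 2 * \<alpha> k \<le> q ^ k * ov" using claim[of k] by simp
  also have "\<dots> \<le> exp (-2) * ov" using qk ov0 by (intro mult_right_mono) auto
  finally have "ov - 2 * \<alpha> k \<le> exp (-2) * ov" .
  then show ?thesis by (simp add: exp_minus field_simps)
qed

lemma numeric:
  fixes a :: "nat \<Rightarrow> ennreal" and Ov :: ennreal and k :: nat
  assumes k1: "k \<ge> 1" and mono: "\<forall>t\<in>{1..k}. a (t-1) \<le> a t"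
    and rec: "\<forall>t\<in>{1..k}. Ov + of_nat k * a (t-1) \<le> 2 * a (t-1) + of_nat k * a t"
  shows "ennreal ((1 - 1 / exp 2) / 2) * Ov \<le> a k"
proof (cases "a k = top")
  case True then show ?thesis by simp
next
  case False
  have le: "t + d \<le> k \<Longrightarrow> a t \<le> a (t + d)" for t d
  proof (induction d)
    case 0 then show ?case by simp
  next
    case (Suc d)
    have "a (t + d) \<le> a (t + Suc d)" using mono Suc.prems
      by (metis add_Suc_right atLeastAtMost_iff diff_Suc_1 le_add1 plus_1_eq_Suc)
    then show ?case using Suc by simp
  qed
  have fin: "a t < top" if "t \<le> k" for t
    using le[of t "k - t"] that False by (simp add: top.not_eq_extremum)
  have r1: "Ov + of_nat k * a 0 \<le> 2 * a 0 + of_nat k * a 1" using rec k1 by (metis atLeastAtMost_iff diff_self_eq_0 le_refl)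
  have "2 * a 0 + of_nat k * a 1 < top" using fin[of 0] fin[of 1] k1
    by (simp add: ennreal_mult_less_top of_nat_less_top)
  then have Ovfin: "Ov < top" using r1 by (metis ennreal_add_eq_top order_le_less_trans top.not_eq_extremum)
  define \<alpha> where "\<alpha> t = enn2real (a t)" for t
  define ov where "ov = enn2real Ov"
  have aeq: "a t = ennreal (\<alpha> t)" if "t \<le> k" for t using fin[OF that] unfolding \<alpha>_def by simp
  have Oveq: "Ov = ennreal ov" using Ovfin unfolding ov_def by simp
  have a0: "\<alpha> t \<ge> 0" for t unfolding \<alpha>_def by simp
  have ov0: "ov \<ge> 0" unfolding ov_def by simp
  have mono': "\<forall>t\<in>{1..k}. \<alpha> (t-1) \<le> \<alpha> t"
  proof
    fix t assume t: "t \<in> {1..k}"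
    have "a (t-1) \<le> a t" using mono t by blast
    moreover have "a (t-1) = ennreal (\<alpha> (t-1))" by (rule aeq) (use t in auto)
    moreover have "a t = ennreal (\<alpha> t)" using aeq[of t] t by simp
    ultimately have "ennreal (\<alpha> (t-1)) \<le> ennreal (\<alpha> t)" by simp
    then show "\<alpha> (t-1) \<le> \<alpha> t" using a0 by (simp add: ennreal_le_iff)
  qed
  have rec': "\<forall>t\<in>{1..k}. ov + real k * \<alpha> (t-1) \<le> 2 * \<alpha> (t-1) + real k * \<alpha> t"
  proof
    fix t assume t: "t \<in> {1..k}"
    have "Ov + of_nat k * a (t-1) \<le> 2 * a (t-1) + of_nat k * a t" using rec t by auto
    moreover have "a (t-1) = ennreal (\<alpha> (t-1))" by (rule aeq) (use t in auto)
    moreover have "a t = ennreal (\<alpha> t)" using aeq[of t] t by simp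
    ultimately have h: "Ov + of_nat k * a (t-1) \<le> 2 * a (t-1) + of_nat k * a t"
      and e: "a (t-1) = ennreal (\<alpha> (t-1))" "a t = ennreal (\<alpha> t)" by auto
    have e1: "Ov + of_nat k * a (t-1) = ennreal (ov + real k * \<alpha> (t-1))"
      unfolding e Oveq using a0 ov0 by (simp add: ennreal_plus ennreal_mult ennreal_of_nat_eq_real_of_nat)
    have e2: "2 * a (t-1) + of_nat k * a t = ennreal (2 * \<alpha> (t-1) + real k * \<alpha> t)"
      unfolding e using a0 by (simp add: ennreal_plus ennreal_mult ennreal_of_nat_eq_real_of_nat)
    have "ennreal (ov + real k * \<alpha> (t-1)) \<le> ennreal (2 * \<alpha> (t-1) + real k * \<alpha> t)"
      using h unfolding e1 e2 .
    then show "ov + real k * \<alpha> (t-1) \<le> 2 * \<alpha> (t-1) + real k * \<alpha> t"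
      using a0 by (subst (asm) ennreal_le_iff) auto
  qed
  have "(1 - 1 / exp 2) / 2 * ov \<le> \<alpha> k" by (rule real_rec[OF k1 ov0 a0 mono' rec'])
  moreover have "(1 - 1 / exp (2::real)) / 2 \<ge> 0" by (simp add: field_simps)
  ultimately have "ennreal ((1 - 1 / exp 2) / 2 * ov) \<le> ennreal (\<alpha> k)" by (intro ennreal_leI)
  moreover have "ennreal ((1 - 1 / exp 2) / 2 * ov) = ennreal ((1 - 1 / exp 2) / 2) * ennreal ov"
    using \<open>(1 - 1 / exp (2::real)) / 2 \<ge> 0\<close> ov0 by (rule ennreal_mult)
  ultimately show ?thesis using Oveq aeq[of k] by simp
qed

context setting
begin

lemma opt_bound:
  assumes SS: "S \<subseteq> {1..n}" and FG: "F S \<le> G" and GG: "\<forall>i\<in>{1..n}-S. F (insert i S) \<le> G"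
  shows "OPT_A n M f k + of_nat k * F S \<le> 2 * F S + of_nat k * G"
proof -
  have each: "adaptive_value n M f k \<pi> + of_nat k * F S \<le> 2 * F S + of_nat k * G"
    if \<pi>: "\<pi> \<in> admissible_policies n M f k" for \<pi>
  proof -
    have vp: "valid_policy n k \<pi>"
      and meas: "(\<lambda>\<theta>. f (partial_state n (adaptive_set \<pi> n \<theta> k) \<theta>)) \<in> borel_measurable P"
      using \<pi> by (auto simp: admissible_policies_def)
    have Veq: "V \<pi> {} (\<lambda>_. 0) k = (\<lambda>\<theta>. ennreal (f (partial_state n (adaptive_set \<pi> n \<theta> k) \<theta>)))"
      by (simp add: V_def adaptive_set_run fun_eq_iff)
    note meas[measurable]
    have "(\<lambda>\<theta>. ennreal (f (partial_state n (adaptive_set \<pi> n \<theta> k) \<theta>))) \<in> borel_measurable P"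
      by measurable
    then have Vm: "V \<pi> {} (\<lambda>_. 0) k \<in> borel_measurable P" by (subst Veq)
    have "integral\<^sup>N P (V \<pi> {} (\<lambda>_. 0) k) + of_nat k * F S
        \<le> T1 S {} (\<lambda>_. 0) + T2 S {} (\<lambda>_. 0) + of_nat k * G"
      by (rule key[OF vp SS FG GG _ _ _ Vm]) auto
    moreover have "T1 S {} (\<lambda>_. 0) = F S" "T2 S {} (\<lambda>_. 0) = F S"
      by (simp_all add: T1_def T2_def expected_value_def)
    moreover have "integral\<^sup>N P (V \<pi> {} (\<lambda>_. 0) k) = adaptive_value n M f k \<pi>"
      by (simp add: Veq adaptive_value_def)
    ultimately show ?thesis by (simp add: mult_2)
  qed
  show ?thesis
  proof (cases "admissible_policies n M f k = {}")
    case True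
    then have "OPT_A n M f k = 0" by (simp add: OPT_A_def bot_ennreal)
    moreover have "of_nat k * F S \<le> of_nat k * G" using FG by (rule mult_left_mono) simp
    ultimately show ?thesis by (simp add: add_increasing)
  next
    case False
    have "OPT_A n M f k + of_nat k * F S
        = (SUP \<pi>\<in>admissible_policies n M f k. adaptive_value n M f k \<pi> + of_nat k * F S)"
      unfolding OPT_A_def by (rule ennreal_SUP_add_left[symmetric, OF False])
    also have "\<dots> \<le> 2 * F S + of_nat k * G" by (rule SUP_least) (rule each)
    finally show ?thesis .
  qed
qed

lemma main:
  assumes k: "k \<in> {1..n}" and gr: "is_nonadaptive_greedy n M f k S"
  shows "ennreal ((1 - 1 / exp 2) / 2) * OPT_A n M f k \<le> expected_value n M f (S k)"
proof -
  have S0: "S 0 = {}" and step: "\<forall>t\<in>{1..k}. \<exists>i\<in>{1..n} - S (t-1). S t = insert i (S (t-1)) \<and>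
      (\<forall>j\<in>{1..n} - S (t-1). F (insert j (S (t-1))) \<le> F (S t))"
    using gr by (auto simp: is_nonadaptive_greedy_def)
  have sub: "t \<le> k \<Longrightarrow> S t \<subseteq> {1..n}" for t
  proof (induction t)
    case 0 show ?case using S0 by simp
  next
    case (Suc t)
    then obtain i where "i \<in> {1..n} - S t" "S (Suc t) = insert i (S t)"
      using step by (metis atLeastAtMost_iff diff_Suc_1 le_add1 plus_1_eq_Suc)
    then show ?case using Suc by auto
  qed
  have mono: "\<forall>t\<in>{1..k}. F (S (t-1)) \<le> F (S t)"
  proof
    fix t assume t: "t \<in> {1..k}"
    then obtain i where "S t = insert i (S (t-1))" using step by blast
    then show "F (S (t-1)) \<le> F (S t)" by (intro F_mono) auto
  qed
  have rec: "\<forall>t\<in>{1..k}. OPT_A n M f k + of_nat k * F (S (t-1)) \<le> 2 * F (S (t-1)) + of_nat k * F (S t)"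
  proof
    fix t assume t: "t \<in> {1..k}"
    obtain i where "S t = insert i (S (t-1))"
      and GG: "\<forall>j\<in>{1..n} - S (t-1). F (insert j (S (t-1))) \<le> F (S t)" using step t by blast
    show "OPT_A n M f k + of_nat k * F (S (t-1)) \<le> 2 * F (S (t-1)) + of_nat k * F (S t)"
    proof (rule opt_bound)
      show "S (t-1) \<subseteq> {1..n}" by (rule sub) (use t in auto)
      show "F (S (t - 1)) \<le> F (S t)" using mono t by blast
      show "\<forall>i\<in>{1..n} - S (t - 1). F (insert i (S (t - 1))) \<le> F (S t)" by (rule GG)
    qed
  qed
  show ?thesis using numeric[of k "\<lambda>t. F (S t)" "OPT_A n M f k"] mono rec k by auto
qed

end

theorem theorem1:
  fixes n k :: nat
    and M :: "nat \<Rightarrow> real measure"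
    and f :: "(nat \<Rightarrow> real) \<Rightarrow> real"
    and S :: "nat \<Rightarrow> nat set"
  assumes "\<forall>i\<in>{1..n}. prob_space (M i)"
    and "\<forall>i\<in>{1..n}. sets (M i) = sets borel"
    and "\<forall>i\<in>{1..n}. AE x in M i. 0 \<le> x"
    and "monotone_submodular n f"
    and "f \<in> borel_measurable (PiM {1..n} (\<lambda>_. borel))"
    and "k \<in> {1..n}"
    and "is_nonadaptive_greedy n M f k S"
  shows "ennreal ((1 - 1 / exp 2) / 2) * OPT_A n M f k \<le> expected_value n M f (S k)"
proof -
  interpret setting n M f using assms(1-5) by unfold_locales
  show ?thesis using main assms(6,7) by blast
qed

end
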